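(* Let $G$ be a weak FI-group, let $H\lhd G$ be a normal weak FI-subgroup, and fix $N\geq 0$. Then $H^{\leq N}$ is a normal weak FI-subgroup of $G$.
   Context: $\mathrm{FI}$ is the category of finite subsets of $\mathbb{N}$ and injections. For groups $A,B$, a homomorphism-modulo-conjugacy $A\to B$ is an equivalence class of homomorphisms under post-composition with conjugations by elements of $B$. A weak FI-group $G$ consists of: groups $G_I$ for finite $I\subset\mathbb{N}$; for each injection $f\colon I\hookrightarrow J$ a homomorphism-modulo-conjugacy $G_f\colon G_I\to G_J$ with $G_{\mathrm{id}}=\mathrm{id}$ and $G_{g\circ f}=G_g\circ G_f$ modulo conjugacy; and for each $I\subset J$ a homomorphism $G_I^J\colon G_I\to G_J$ representing $G_f$ for the inclusion $f$, with $G_J^K\circ G_I^J=G_I^K$. A normal weak FI-subgroup $H\lhd G$ is a choice of normal subgroups $H_I\lhd G_I$ with $G_f(H_I)\subset H_J$ for every injection $f\colon I\hookrightarrow J$. For $I\subset J$ set $H_J(I)=G_I^J(H_I)$. For $N\geq 0$ and finite $J$, $H^{\leq N}_J$ is the subgroup of $G_J$ generated by the $G_J$-conjugates of the subgroups $H_J(I)$ for $I\subset J$ with $|I|\leq N$. *)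

theory Defs
  imports "HOL-Algebra.Algebra" "HOL-Library.FuncSet"
begin

text \<open>Groups are HOL-Algebra groups; all groups G I share one element type 'a.
  A homomorphism-modulo-conjugacy is represented by a representative homomorphism;
  equalities of homomorphisms-modulo-conjugacy become "conjugate" relations.\<close>

definition conj_equiv :: "('a, 'm) monoid_scheme \<Rightarrow> ('b, 'n) monoid_scheme
    \<Rightarrow> ('a \<Rightarrow> 'b) \<Rightarrow> ('a \<Rightarrow> 'b) \<Rightarrow> bool" where
  "conj_equiv A B \<phi> \<psi> \<longleftrightarrow>
     (\<exists>b\<in>carrier B. \<forall>x\<in>carrier A. \<psi> x = b \<otimes>\<^bsub>B\<^esub> \<phi> x \<otimes>\<^bsub>B\<^esub> inv\<^bsub>B\<^esub> b)"

definition FI_inj :: "(nat \<Rightarrow> nat) \<Rightarrow> nat set \<Rightarrow> nat set \<Rightarrow> bool" where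
  "FI_inj f I J \<longleftrightarrow> finite I \<and> finite J \<and> f \<in> I \<rightarrow>\<^sub>E J \<and> inj_on f I"

text \<open>G I : the group G_I; Gf f I J : a representative of G_f for an injection f : I -> J;
  Gincl I J : the chosen homomorphism G_I^J for I \<subseteq> J.\<close>

definition weak_FI_group :: "(nat set \<Rightarrow> ('a, 'm) monoid_scheme)
    \<Rightarrow> ((nat \<Rightarrow> nat) \<Rightarrow> nat set \<Rightarrow> nat set \<Rightarrow> 'a \<Rightarrow> 'a)
    \<Rightarrow> (nat set \<Rightarrow> nat set \<Rightarrow> 'a \<Rightarrow> 'a) \<Rightarrow> bool" where
  "weak_FI_group G Gf Gincl \<longleftrightarrow>
     (\<forall>I. finite I \<longrightarrow> group (G I)) \<and>
     (\<forall>f I J. FI_inj f I J \<longrightarrow> Gf f I J \<in> hom (G I) (G J)) \<and>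
     (\<forall>I. finite I \<longrightarrow> conj_equiv (G I) (G I) (\<lambda>x. x) (Gf (\<lambda>i\<in>I. i) I I)) \<and>
     (\<forall>f g I J K. FI_inj f I J \<longrightarrow> FI_inj g J K \<longrightarrow>
        conj_equiv (G I) (G K) (Gf g J K \<circ> Gf f I J) (Gf (compose I g f) I K)) \<and>
     (\<forall>I J. finite J \<longrightarrow> I \<subseteq> J \<longrightarrow>
        Gincl I J \<in> hom (G I) (G J) \<and>
        conj_equiv (G I) (G J) (Gf (\<lambda>i\<in>I. i) I J) (Gincl I J)) \<and>
     (\<forall>I J K. finite K \<longrightarrow> I \<subseteq> J \<longrightarrow> J \<subseteq> K \<longrightarrow>
        (\<forall>x\<in>carrier (G I). Gincl J K (Gincl I J x) = Gincl I K x))"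

definition normal_weak_FI_subgroup :: "(nat set \<Rightarrow> 'a set)
    \<Rightarrow> (nat set \<Rightarrow> ('a, 'm) monoid_scheme)
    \<Rightarrow> ((nat \<Rightarrow> nat) \<Rightarrow> nat set \<Rightarrow> nat set \<Rightarrow> 'a \<Rightarrow> 'a)
    \<Rightarrow> (nat set \<Rightarrow> nat set \<Rightarrow> 'a \<Rightarrow> 'a) \<Rightarrow> bool" where
  "normal_weak_FI_subgroup H G Gf Gincl \<longleftrightarrow>
     (\<forall>I. finite I \<longrightarrow> H I \<lhd> G I) \<and>
     (\<forall>f I J. FI_inj f I J \<longrightarrow> Gf f I J ` H I \<subseteq> H J)"

definition H_at :: "(nat set \<Rightarrow> 'a set) \<Rightarrow> (nat set \<Rightarrow> nat set \<Rightarrow> 'a \<Rightarrow> 'a)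
    \<Rightarrow> nat set \<Rightarrow> nat set \<Rightarrow> 'a set" where
  "H_at H Gincl J I = Gincl I J ` H I"

definition H_le :: "(nat set \<Rightarrow> 'a set) \<Rightarrow> (nat set \<Rightarrow> ('a, 'm) monoid_scheme)
    \<Rightarrow> (nat set \<Rightarrow> nat set \<Rightarrow> 'a \<Rightarrow> 'a) \<Rightarrow> nat \<Rightarrow> nat set \<Rightarrow> 'a set" where
  "H_le H G Gincl N J = generate (G J)
     (\<Union>{ {g \<otimes>\<^bsub>G J\<^esub> h \<otimes>\<^bsub>G J\<^esub> inv\<^bsub>G J\<^esub> g | h. h \<in> H_at H Gincl J I} | g I.
          g \<in> carrier (G J) \<and> I \<subseteq> J \<and> card I \<le> N})"

end

theory Submission
  imports Defs
begin

definition Sset :: "(nat set \<Rightarrow> 'a set) \<Rightarrow> (nat set \<Rightarrow> ('a, 'm) monoid_scheme)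
    \<Rightarrow> (nat set \<Rightarrow> nat set \<Rightarrow> 'a \<Rightarrow> 'a) \<Rightarrow> nat \<Rightarrow> nat set \<Rightarrow> 'a set" where
  "Sset H G Gincl N J = (\<Union>{ {g \<otimes>\<^bsub>G J\<^esub> h \<otimes>\<^bsub>G J\<^esub> inv\<^bsub>G J\<^esub> g | h. h \<in> H_at H Gincl J I} | g I.
          g \<in> carrier (G J) \<and> I \<subseteq> J \<and> card I \<le> N})"

lemma H_le_Sset: "H_le H G Gincl N J = generate (G J) (Sset H G Gincl N J)"
  unfolding H_le_def Sset_def by simp

lemma Sset_iff: "x \<in> Sset H G Gincl N J \<longleftrightarrow>
  (\<exists>g I h. g \<in> carrier (G J) \<and> I \<subseteq> J \<and> card I \<le> N \<and> h \<in> H I \<and>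
     x = g \<otimes>\<^bsub>G J\<^esub> Gincl I J h \<otimes>\<^bsub>G J\<^esub> inv\<^bsub>G J\<^esub> g)"
  unfolding Sset_def H_at_def
  apply (rule iffI)
   apply (erule UnionE)
   apply (erule CollectE)
   apply (elim exE conjE)
   apply (simp, blast)
  apply (elim exE conjE)
  apply (rule UnionI[of "{g \<otimes>\<^bsub>G J\<^esub> h \<otimes>\<^bsub>G J\<^esub> inv\<^bsub>G J\<^esub> g | h. h \<in> Gincl I J ` H I}" for g I])
   apply blast
  apply blast
  done

lemma (in group) conj_comp:
  "a \<in> carrier G \<Longrightarrow> b \<in> carrier G \<Longrightarrow> y \<in> carrier G \<Longrightarrow>
   a \<otimes> (b \<otimes> y \<otimes> inv b) \<otimes> inv a = (a \<otimes> b) \<otimes> y \<otimes> inv (a \<otimes> b)"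
  by (simp add: m_assoc inv_mult_group)

lemma (in group) conj_solve:
  "z = a \<otimes> x \<otimes> inv a \<Longrightarrow> a \<in> carrier G \<Longrightarrow> x \<in> carrier G \<Longrightarrow>
   x = inv a \<otimes> z \<otimes> inv (inv a)"
  by (simp add: m_assoc[symmetric], simp add: m_assoc)

lemma (in group) conj3:
  "a \<in> carrier G \<Longrightarrow> b \<in> carrier G \<Longrightarrow> c \<in> carrier G \<Longrightarrow> y \<in> carrier G \<Longrightarrow>
   a \<otimes> (b \<otimes> (c \<otimes> y \<otimes> inv c) \<otimes> inv b) \<otimes> inv a = (a \<otimes> (b \<otimes> c)) \<otimes> y \<otimes> inv (a \<otimes> (b \<otimes> c))"
  by (simp add: m_assoc inv_mult_group)

lemma key:
  assumes W: "weak_FI_group G Gf Gincl"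
    and NH: "normal_weak_FI_subgroup H G Gf Gincl"
    and F: "FI_inj f I J" and KI: "K \<subseteq> I" and h: "h \<in> H K"
  shows "\<exists>c\<in>carrier (G J). \<exists>h'\<in>H (f ` K).
     Gf f I J (Gincl K I h) = c \<otimes>\<^bsub>G J\<^esub> Gincl (f ` K) J h' \<otimes>\<^bsub>G J\<^esub> inv\<^bsub>G J\<^esub> c"
proof -
  have Wg: "\<And>I. finite I \<Longrightarrow> group (G I)"
    and Wh: "\<And>f I J. FI_inj f I J \<Longrightarrow> Gf f I J \<in> hom (G I) (G J)"
    and Wc: "\<And>f g I J K. FI_inj f I J \<Longrightarrow> FI_inj g J K \<Longrightarrow>
        conj_equiv (G I) (G K) (Gf g J K \<circ> Gf f I J) (Gf (compose I g f) I K)"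
    and Wi: "\<And>I J. finite J \<Longrightarrow> I \<subseteq> J \<Longrightarrow> Gincl I J \<in> hom (G I) (G J) \<and>
        conj_equiv (G I) (G J) (Gf (\<lambda>i\<in>I. i) I J) (Gincl I J)"
    using W unfolding weak_FI_group_def by simp_all
  have fI: "finite I" and fJ: "finite J" and fE: "f \<in> I \<rightarrow>\<^sub>E J" and inj: "inj_on f I"
    using F by (auto simp: FI_inj_def)
  have fK: "finite K" using fI KI finite_subset by blast
  have fKJ: "f ` K \<subseteq> J" using fE KI by auto
  have ffK: "finite (f ` K)" using fK by simp
  define idK where "idK = (\<lambda>i\<in>K. i)"
  define rf where "rf = (\<lambda>x\<in>K. f x)"
  define incf where "incf = (\<lambda>i\<in>f ` K. i)"
  have F1: "FI_inj idK K I" using fK fI KI by (auto simp: FI_inj_def idK_def)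
  have F2: "FI_inj rf K (f ` K)" using fK ffK inj KI
    by (auto simp: FI_inj_def rf_def inj_on_def)
  have F3: "FI_inj incf (f ` K) J" using ffK fJ fKJ by (auto simp: FI_inj_def incf_def)
  have c1: "compose K f idK = rf" by (auto simp: compose_def idK_def rf_def)
  have c2: "compose K incf rf = rf" by (auto simp: compose_def incf_def rf_def)
  have gI: "group (G I)" and gJ: "group (G J)" and gK: "group (G K)" and gfK: "group (G (f ` K))"
    using Wg fI fJ fK ffK by auto
  interpret GI: group "G I" by (rule gI)
  interpret GJ: group "G J" by (rule gJ)
  have hc: "h \<in> carrier (G K)"
    using NH fK h by (auto simp: normal_weak_FI_subgroup_def normal_def subgroup_def)
  have phi: "Gf f I J \<in> hom (G I) (G J)" using Wh F by auto
  have hidK: "Gf idK K I \<in> hom (G K) (G I)" using Wh F1 by auto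
  have hrf: "Gf rf K (f ` K) \<in> hom (G K) (G (f ` K))" using Wh F2 by auto
  have hrfJ: "Gf rf K J \<in> hom (G K) (G J)"
  proof -
    have "FI_inj rf K J" using fK fJ fKJ inj KI by (auto simp: FI_inj_def rf_def inj_on_def)
    thus ?thesis using Wh by auto
  qed
  have hincf: "Gf incf (f ` K) J \<in> hom (G (f ` K)) (G J)" using Wh F3 by auto
  have hincl: "Gincl (f ` K) J \<in> hom (G (f ` K)) (G J)" using Wi fJ fKJ by auto
  obtain b1 where b1: "b1 \<in> carrier (G I)"
    "Gincl K I h = b1 \<otimes>\<^bsub>G I\<^esub> Gf idK K I h \<otimes>\<^bsub>G I\<^esub> inv\<^bsub>G I\<^esub> b1"
    using Wi[OF fI KI] hc unfolding conj_equiv_def idK_def by blast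
  obtain b2 where b2: "b2 \<in> carrier (G J)"
    "Gf rf K J h = b2 \<otimes>\<^bsub>G J\<^esub> Gf f I J (Gf idK K I h) \<otimes>\<^bsub>G J\<^esub> inv\<^bsub>G J\<^esub> b2"
  proof -
    have "conj_equiv (G K) (G J) (Gf f I J \<circ> Gf idK K I) (Gf (compose K f idK) K J)"
      using Wc[OF F1 F] .
    thus ?thesis using that hc unfolding conj_equiv_def c1 by auto
  qed
  obtain b3 where b3: "b3 \<in> carrier (G J)"
    "Gf rf K J h = b3 \<otimes>\<^bsub>G J\<^esub> Gf incf (f ` K) J (Gf rf K (f ` K) h) \<otimes>\<^bsub>G J\<^esub> inv\<^bsub>G J\<^esub> b3"
  proof -
    have "conj_equiv (G K) (G J) (Gf incf (f ` K) J \<circ> Gf rf K (f ` K)) (Gf (compose K incf rf) K J)"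
      using Wc[OF F2 F3] .
    thus ?thesis using that hc unfolding conj_equiv_def c2 by auto
  qed
  define h' where "h' = Gf rf K (f ` K) h"
  have h'H: "h' \<in> H (f ` K)" using NH F2 h unfolding normal_weak_FI_subgroup_def h'_def by blast
  have h'c: "h' \<in> carrier (G (f ` K))" using hrf hc unfolding h'_def by (auto simp: hom_def)
  obtain b4 where b4: "b4 \<in> carrier (G J)"
    "Gincl (f ` K) J h' = b4 \<otimes>\<^bsub>G J\<^esub> Gf incf (f ` K) J h' \<otimes>\<^bsub>G J\<^esub> inv\<^bsub>G J\<^esub> b4"
    using Wi[OF fJ fKJ] h'c unfolding conj_equiv_def incf_def by blast
  define y where "y = Gincl (f ` K) J h'"
  have yc: "y \<in> carrier (G J)" using hincl h'c unfolding y_def by (auto simp: hom_def)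
  have e4: "Gf incf (f ` K) J h' = inv\<^bsub>G J\<^esub> b4 \<otimes>\<^bsub>G J\<^esub> y \<otimes>\<^bsub>G J\<^esub> inv\<^bsub>G J\<^esub> (inv\<^bsub>G J\<^esub> b4)"
    using GJ.conj_solve[OF b4(2) b4(1)] hincf h'c unfolding y_def by (auto simp: hom_def)
  have X: "Gf idK K I h \<in> carrier (G I)" using hidK hc by (auto simp: hom_def)
  have PX: "Gf f I J (Gf idK K I h) \<in> carrier (G J)" using phi X by (auto simp: hom_def)
  have e2: "Gf f I J (Gf idK K I h) = inv\<^bsub>G J\<^esub> b2 \<otimes>\<^bsub>G J\<^esub> Gf rf K J h \<otimes>\<^bsub>G J\<^esub> inv\<^bsub>G J\<^esub> (inv\<^bsub>G J\<^esub> b2)"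
    using GJ.conj_solve[OF b2(2) b2(1) PX] .
  define c0 where "c0 = inv\<^bsub>G J\<^esub> b2 \<otimes>\<^bsub>G J\<^esub> (b3 \<otimes>\<^bsub>G J\<^esub> inv\<^bsub>G J\<^esub> b4)"
  have c0c: "c0 \<in> carrier (G J)" using b2 b3 b4 unfolding c0_def by simp
  have e3: "Gf f I J (Gf idK K I h) = c0 \<otimes>\<^bsub>G J\<^esub> y \<otimes>\<^bsub>G J\<^esub> inv\<^bsub>G J\<^esub> c0"
    unfolding e2 b3(2) h'_def[symmetric] e4 c0_def
    apply (rule GJ.conj3)
    using b2 b3 b4 yc by auto
  have pb1: "Gf f I J b1 \<in> carrier (G J)" using phi b1 by (auto simp: hom_def)
  have "Gf f I J (Gincl K I h) = Gf f I J b1 \<otimes>\<^bsub>G J\<^esub> Gf f I J (Gf idK K I h) \<otimes>\<^bsub>G J\<^esub> inv\<^bsub>G J\<^esub> Gf f I J b1"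
  proof -
    interpret gh: group_hom "G I" "G J" "Gf f I J" using phi gI gJ by (simp add: group_hom_def group_hom_axioms_def)
    show ?thesis unfolding b1(2) using b1(1) X by simp
  qed
  also have "\<dots> = (Gf f I J b1 \<otimes>\<^bsub>G J\<^esub> c0) \<otimes>\<^bsub>G J\<^esub> y \<otimes>\<^bsub>G J\<^esub> inv\<^bsub>G J\<^esub> (Gf f I J b1 \<otimes>\<^bsub>G J\<^esub> c0)"
    unfolding e3 using pb1 c0c yc by (simp add: GJ.conj_comp)
  finally show ?thesis using pb1 c0c h'H unfolding y_def by blast
qed


theorem lemma2p19:
  fixes G :: "nat set \<Rightarrow> ('a, 'm) monoid_scheme"
    and Gf :: "(nat \<Rightarrow> nat) \<Rightarrow> nat set \<Rightarrow> nat set \<Rightarrow> 'a \<Rightarrow> 'a"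
    and Gincl :: "nat set \<Rightarrow> nat set \<Rightarrow> 'a \<Rightarrow> 'a"
    and H :: "nat set \<Rightarrow> 'a set"
    and N :: nat
  assumes "weak_FI_group G Gf Gincl"
    and "normal_weak_FI_subgroup H G Gf Gincl"
  shows "normal_weak_FI_subgroup (H_le H G Gincl N) G Gf Gincl"
proof -
  note W = assms(1) and NH = assms(2)
  have Wg: "\<And>I. finite I \<Longrightarrow> group (G I)"
    and Wh: "\<And>f I J. FI_inj f I J \<Longrightarrow> Gf f I J \<in> hom (G I) (G J)"
    and Wi: "\<And>I J. finite J \<Longrightarrow> I \<subseteq> J \<Longrightarrow> Gincl I J \<in> hom (G I) (G J)"
    using W unfolding weak_FI_group_def by simp_all
  have Hc: "\<And>I. finite I \<Longrightarrow> H I \<subseteq> carrier (G I)"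
    using NH by (auto simp: normal_weak_FI_subgroup_def normal_def subgroup_def)
  have Sc: "Sset H G Gincl N J \<subseteq> carrier (G J)" if fJ: "finite J" for J
  proof
    fix x assume "x \<in> Sset H G Gincl N J"
    then obtain g I h where gIh: "g \<in> carrier (G J)" "I \<subseteq> J" "h \<in> H I"
      "x = g \<otimes>\<^bsub>G J\<^esub> Gincl I J h \<otimes>\<^bsub>G J\<^esub> inv\<^bsub>G J\<^esub> g"
      unfolding Sset_iff by blast
    interpret GJ: group "G J" using Wg fJ .
    have "finite I" using fJ gIh(2) finite_subset by blast
    hence "Gincl I J h \<in> carrier (G J)" using Wi[OF fJ gIh(2)] Hc gIh(3) by (auto simp: hom_def)
    thus "x \<in> carrier (G J)" using gIh by simp
  qed
  show ?thesis unfolding normal_weak_FI_subgroup_def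
  proof (intro conjI allI impI)
    fix J :: "nat set" assume fJ: "finite J"
    interpret GJ: group "G J" using Wg fJ .
    show "H_le H G Gincl N J \<lhd> G J" unfolding H_le_Sset
    proof (rule GJ.normal_generateI[OF Sc[OF fJ]])
      fix x c assume x: "x \<in> Sset H G Gincl N J" and c: "c \<in> carrier (G J)"
      then obtain g I h where gIh: "g \<in> carrier (G J)" "I \<subseteq> J" "card I \<le> N" "h \<in> H I"
        "x = g \<otimes>\<^bsub>G J\<^esub> Gincl I J h \<otimes>\<^bsub>G J\<^esub> inv\<^bsub>G J\<^esub> g"
        unfolding Sset_iff by blast
      have "finite I" using fJ gIh(2) finite_subset by blast
      hence yc: "Gincl I J h \<in> carrier (G J)" using Wi[OF fJ gIh(2)] Hc gIh(4) by (auto simp: hom_def)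
      have "c \<otimes>\<^bsub>G J\<^esub> x \<otimes>\<^bsub>G J\<^esub> inv\<^bsub>G J\<^esub> c
          = (c \<otimes>\<^bsub>G J\<^esub> g) \<otimes>\<^bsub>G J\<^esub> Gincl I J h \<otimes>\<^bsub>G J\<^esub> inv\<^bsub>G J\<^esub> (c \<otimes>\<^bsub>G J\<^esub> g)"
        unfolding gIh(5) using GJ.conj_comp[OF c gIh(1) yc] .
      moreover have "c \<otimes>\<^bsub>G J\<^esub> g \<in> carrier (G J)" using c gIh(1) by simp
      ultimately show "c \<otimes>\<^bsub>G J\<^esub> x \<otimes>\<^bsub>G J\<^esub> inv\<^bsub>G J\<^esub> c \<in> Sset H G Gincl N J"
        unfolding Sset_iff using gIh by blast
    qed
  next
    fix f I J assume F: "FI_inj f I J"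
    have fI: "finite I" and fJ: "finite J" and fE: "f \<in> I \<rightarrow>\<^sub>E J"
      using F by (auto simp: FI_inj_def)
    interpret GJ: group "G J" using Wg fJ .
    interpret GI: group "G I" using Wg fI .
    interpret gh: group_hom "G I" "G J" "Gf f I J"
      using Wh[OF F] by (simp add: group_hom_def group_hom_axioms_def GI.group_axioms GJ.group_axioms)
    have img: "Gf f I J ` Sset H G Gincl N I \<subseteq> Sset H G Gincl N J"
    proof
      fix z assume "z \<in> Gf f I J ` Sset H G Gincl N I"
      then obtain x where x: "x \<in> Sset H G Gincl N I" and z: "z = Gf f I J x" by blast
      then obtain g K h where gKh: "g \<in> carrier (G I)" "K \<subseteq> I" "card K \<le> N" "h \<in> H K"
        "x = g \<otimes>\<^bsub>G I\<^esub> Gincl K I h \<otimes>\<^bsub>G I\<^esub> inv\<^bsub>G I\<^esub> g"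
        unfolding Sset_iff by blast
      have fK: "finite K" using fI gKh(2) finite_subset by blast
      have yc: "Gincl K I h \<in> carrier (G I)" using Wi[OF fI gKh(2)] Hc[OF fK] gKh(4) by (auto simp: hom_def)
      obtain c h' where c: "c \<in> carrier (G J)" and h': "h' \<in> H (f ` K)" and
        e: "Gf f I J (Gincl K I h) = c \<otimes>\<^bsub>G J\<^esub> Gincl (f ` K) J h' \<otimes>\<^bsub>G J\<^esub> inv\<^bsub>G J\<^esub> c"
        using key[OF W NH F gKh(2,4)] by blast
      have fKJ: "f ` K \<subseteq> J" using fE gKh(2) by auto
      have y'c: "Gincl (f ` K) J h' \<in> carrier (G J)"
        using Wi[OF fJ fKJ] Hc[of "f ` K"] fK h' by (auto simp: hom_def)
      have pg: "Gf f I J g \<in> carrier (G J)" using gKh(1) by simp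
      have "z = Gf f I J g \<otimes>\<^bsub>G J\<^esub> Gf f I J (Gincl K I h) \<otimes>\<^bsub>G J\<^esub> inv\<^bsub>G J\<^esub> Gf f I J g"
        unfolding z gKh(5) using gKh(1) yc by simp
      also have "\<dots> = (Gf f I J g \<otimes>\<^bsub>G J\<^esub> c) \<otimes>\<^bsub>G J\<^esub> Gincl (f ` K) J h' \<otimes>\<^bsub>G J\<^esub> inv\<^bsub>G J\<^esub> (Gf f I J g \<otimes>\<^bsub>G J\<^esub> c)"
        unfolding e using GJ.conj_comp[OF pg c y'c] .
      finally have zz: "z = (Gf f I J g \<otimes>\<^bsub>G J\<^esub> c) \<otimes>\<^bsub>G J\<^esub> Gincl (f ` K) J h' \<otimes>\<^bsub>G J\<^esub> inv\<^bsub>G J\<^esub> (Gf f I J g \<otimes>\<^bsub>G J\<^esub> c)" .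
      have "card (f ` K) \<le> N" using card_image_le[OF fK, of f] gKh(3) by linarith
      moreover have "Gf f I J g \<otimes>\<^bsub>G J\<^esub> c \<in> carrier (G J)" using pg c by simp
      ultimately show "z \<in> Sset H G Gincl N J"
        unfolding Sset_iff using zz fKJ h' by blast
    qed
    have "Gf f I J ` H_le H G Gincl N I = generate (G J) (Gf f I J ` Sset H G Gincl N I)"
      unfolding H_le_Sset using gh.generate_img[OF Sc[OF fI]] by simp
    also have "\<dots> \<subseteq> H_le H G Gincl N J" unfolding H_le_Sset by (rule GJ.mono_generate[OF img])
    finally show "Gf f I J ` H_le H G Gincl N I \<subseteq> H_le H G Gincl N J" .
  qed
qed

end
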